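(* Let $\mathcal{R}\subset\mathbb{R}_{>0}^n$ be a compact log-convex set and let $\ell:\mathcal{R}\to\mathbb{R}_{>0}$ be continuous. Then for every $\tilde\varepsilon>0$ there exist positive integers $p,q$ and a subtraction-free expression $E$ in $n$ variables $y_1,\dots,y_n$ such that the function $$f(\mathbf{x})=E(x_1^{1/q},\dots,x_n^{1/q})^{1/p}$$ (obtained by substituting $x_i^{1/q}$ for $y_i$) satisfies, for all $\mathbf{x}\in\mathcal{R}$, $$\left|\frac{\ell(\mathbf{x})-f(\mathbf{x})}{\min(\ell(\mathbf{x}),f(\mathbf{x}))}\right|\leqslant\tilde\varepsilon.$$
   Context: A set $\mathcal{R}\subset\mathbb{R}_{>0}^n$ is log-convex if its image under the entrywise logarithm is convex. A subtraction-free expression in variables $y_1,\dots,y_n$ is a formal term generated by the grammar $E\to E+E,\ E\times E,\ E/E,\ C,\ y_1,\dots,y_n$, where $C$ ranges over positive real constants (i.e., built from the variables and positive constants using only addition, multiplication and division, no subtraction); it is evaluated at positive arguments in the obvious way. *)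

theory Defs
  imports "HOL-Analysis.Analysis"
begin

datatype 'n sfexpr =
    SAdd "'n sfexpr" "'n sfexpr"
  | SMul "'n sfexpr" "'n sfexpr"
  | SDiv "'n sfexpr" "'n sfexpr"
  | SConst real
  | SVar 'n

fun sf_wf :: "'n sfexpr \<Rightarrow> bool" where
  "sf_wf (SAdd a b) = (sf_wf a \<and> sf_wf b)"
| "sf_wf (SMul a b) = (sf_wf a \<and> sf_wf b)"
| "sf_wf (SDiv a b) = (sf_wf a \<and> sf_wf b)"
| "sf_wf (SConst c) = (c > 0)"
| "sf_wf (SVar i) = True"

fun sf_eval :: "'n sfexpr \<Rightarrow> (real ^ 'n) \<Rightarrow> real" where
  "sf_eval (SAdd a b) y = sf_eval a y + sf_eval b y"
| "sf_eval (SMul a b) y = sf_eval a y * sf_eval b y"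
| "sf_eval (SDiv a b) y = sf_eval a y / sf_eval b y"
| "sf_eval (SConst c) y = c"
| "sf_eval (SVar i) y = y $ i"

definition positive_orthant :: "(real ^ 'n) set" where
  "positive_orthant = {x. \<forall>i. x $ i > 0}"

definition log_convex :: "(real ^ 'n) set \<Rightarrow> bool" where
  "log_convex R \<longleftrightarrow> R \<subseteq> positive_orthant \<and> convex ((\<lambda>x. \<chi> i. ln (x $ i)) ` R)"

end

theory Submission
  imports Defs
begin

lemma sf_pos: "sf_wf E \<Longrightarrow> x \<in> positive_orthant \<Longrightarrow> sf_eval E x > 0"
  by (induction E) (auto simp: positive_orthant_def)

lemma sf_cont: "sf_wf E \<Longrightarrow> continuous_on positive_orthant (sf_eval E)"
proof (induction E)
  case (SDiv a b)
  then show ?case using sf_pos[of b]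
    by (auto intro!: continuous_intros simp: less_imp_neq[symmetric])
qed (auto intro!: continuous_intros)

definition DF :: "(real ^ 'n \<Rightarrow> real) set" where
  "DF = {g. \<exists>A B. sf_wf A \<and> sf_wf B \<and> (\<forall>x. g x = sf_eval A x - sf_eval B x)}"

lemma DF_const: "(\<lambda>x. c) \<in> DF"
  unfolding DF_def
  by (rule CollectI, rule exI[of _ "SConst (max c 0 + 1)"], rule exI[of _ "SConst (max (-c) 0 + 1)"]) auto

lemma DF_var: "(\<lambda>x. x $ i) \<in> DF"
  unfolding DF_def
  by (rule CollectI, rule exI[of _ "SAdd (SVar i) (SConst 1)"], rule exI[of _ "SConst 1"]) auto

lemma DF_add: "f \<in> DF \<Longrightarrow> g \<in> DF \<Longrightarrow> (\<lambda>x. f x + g x) \<in> DF"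
proof -
  assume "f \<in> DF" "g \<in> DF"
  then obtain A1 B1 A2 B2 where h: "sf_wf A1" "sf_wf B1" "\<forall>x. f x = sf_eval A1 x - sf_eval B1 x"
    "sf_wf A2" "sf_wf B2" "\<forall>x. g x = sf_eval A2 x - sf_eval B2 x"
    unfolding DF_def by blast
  show ?thesis unfolding DF_def
    by (rule CollectI, rule exI[of _ "SAdd A1 A2"], rule exI[of _ "SAdd B1 B2"]) (use h in auto)
qed

lemma DF_mult: "f \<in> DF \<Longrightarrow> g \<in> DF \<Longrightarrow> (\<lambda>x. f x * g x) \<in> DF"
proof -
  assume "f \<in> DF" "g \<in> DF"
  then obtain A1 B1 A2 B2 where h: "sf_wf A1" "sf_wf B1" "\<forall>x. f x = sf_eval A1 x - sf_eval B1 x"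
    "sf_wf A2" "sf_wf B2" "\<forall>x. g x = sf_eval A2 x - sf_eval B2 x"
    unfolding DF_def by blast
  show ?thesis unfolding DF_def
    by (rule CollectI, rule exI[of _ "SAdd (SMul A1 A2) (SMul B1 B2)"],
        rule exI[of _ "SAdd (SMul A1 B2) (SMul B1 A2)"], intro conjI allI)
       (simp_all only: h sf_wf.simps sf_eval.simps, simp_all add: algebra_simps)
qed

lemma DF_sum: "finite S \<Longrightarrow> (\<forall>i\<in>S. f i \<in> DF) \<Longrightarrow> (\<lambda>x. \<Sum>i\<in>S. f i x) \<in> DF"
proof (induction S rule: finite_induct)
  case empty
  then show ?case using DF_const[of 0] by simp
next
  case (insert a F)
  then show ?case using DF_add[of "f a" "\<lambda>x. \<Sum>i\<in>F. f i x"] by simp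
qed

lemma DF_linear:
  fixes f :: "real ^ 'n \<Rightarrow> real"
  assumes "bounded_linear f"
  shows "f \<in> DF"
proof -
  have lin: "linear f" using assms bounded_linear.linear by blast
  have eq: "f x = (\<Sum>i\<in>UNIV. x $ i * f (axis i 1))" for x
  proof -
    have "f x = f (\<Sum>i\<in>UNIV. (x$i) *\<^sub>R axis i 1)"
      using basis_expansion[of x] by (simp add: scalar_mult_eq_scaleR)
    also have "\<dots> = (\<Sum>i\<in>UNIV. x $ i * f (axis i 1))"
      by (simp add: linear_sum[OF lin] linear_scale[OF lin])
    finally show ?thesis .
  qed
  have "(\<lambda>x. \<Sum>i\<in>UNIV. x $ i * f (axis i 1)) \<in> DF"
  proof (rule DF_sum)
    show "\<forall>i\<in>UNIV. (\<lambda>x. x $ i * f (axis i 1)) \<in> DF"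
      using DF_mult[OF DF_var DF_const] by blast
  qed simp
  moreover have "f = (\<lambda>x. \<Sum>i\<in>UNIV. x $ i * f (axis i 1))" using eq by (rule ext)
  ultimately show ?thesis by simp
qed

lemma DF_poly:
  fixes g :: "real ^ 'n \<Rightarrow> real"
  shows "real_polynomial_function g \<Longrightarrow> g \<in> DF"
proof (induction rule: real_polynomial_function.induct)
  case (linear f) then show ?case by (rule DF_linear)
next
  case (const c) then show ?case by (rule DF_const)
next
  case (add f g) then show ?case using DF_add by blast
next
  case (mult f g) then show ?case using DF_mult by blast
qed

fun geo :: "'n sfexpr \<Rightarrow> nat \<Rightarrow> 'n sfexpr" where
  "geo T 0 = SConst 1"
| "geo T (Suc k) = SAdd (SConst 1) (SMul T (geo T k))"

lemma geo_wf: "sf_wf T \<Longrightarrow> sf_wf (geo T k)"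
  by (induction k) auto

lemma geo_eval: "sf_eval (geo T k) x * (1 - sf_eval T x) = 1 - sf_eval T x ^ Suc k"
proof (induction k)
  case (Suc k)
  have "sf_eval (geo T (Suc k)) x * (1 - sf_eval T x)
     = (1 - sf_eval T x) + sf_eval T x * (sf_eval (geo T k) x * (1 - sf_eval T x))"
    by (simp add: algebra_simps)
  also have "\<dots> = 1 - sf_eval T x ^ Suc (Suc k)" by (simp only: Suc.IH) (simp add: algebra_simps)
  finally show ?case .
qed simp

lemma key_bound:
  fixes l g f s m \<delta> \<epsilon> M :: real
  assumes "m > 0" "l \<ge> m" "\<bar>l - g\<bar> < \<delta>" "\<delta> \<le> m/2" "\<delta> \<le> \<epsilon>*m/4" "g \<ge> m/2" "g \<le> M"
    "M > 0" "0 \<le> s" "s \<le> 1/2" "s \<le> \<epsilon>*m/(8*M)" "f = g/(1-s)" "\<epsilon> > 0"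
  shows "\<bar>(l - f) / min l f\<bar> \<le> \<epsilon>"
proof -
  have s1: "1 - s \<ge> 1/2" using assms(10) by linarith
  have g0: "g > 0" using assms(1,6) by linarith
  have f_ge: "f \<ge> g"
  proof -
    have "g * (1 - s) \<le> g" using g0 assms(9) by (simp add: mult_left_le)
    then show ?thesis using s1 assms(12) by (simp add: le_divide_eq)
  qed
  have fg: "f - g = g * s / (1 - s)" using s1 assms(12) by (simp add: field_simps)
  have "g * s / (1 - s) \<le> (M * s) / (1/2)"
    by (rule frac_le) (use g0 assms(7,9) s1 in \<open>auto intro: mult_right_mono\<close>)
  also have "\<dots> = 2 * (M * s)" by simp
  also have "\<dots> \<le> 2 * (M * (\<epsilon>*m/(8*M)))"
    using assms(8,11) by (intro mult_left_mono) auto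
  also have "\<dots> = \<epsilon>*m/4" using assms(8) by (simp add: field_simps)
  finally have fg2: "f - g \<le> \<epsilon>*m/4" using fg by simp
  have "\<bar>l - f\<bar> \<le> \<bar>l - g\<bar> + (f - g)" using f_ge by linarith
  also have "\<dots> \<le> \<epsilon>*m/2" using assms(3,5) fg2 by linarith
  finally have num: "\<bar>l - f\<bar> \<le> \<epsilon>*m/2" .
  have mn: "min l f \<ge> m/2" using assms(1,2,6) f_ge by linarith
  have mn0: "min l f > 0" using mn assms(1) by linarith
  have "\<bar>(l - f) / min l f\<bar> = \<bar>l - f\<bar> / min l f" using mn0 by simp
  also have "\<dots> \<le> (\<epsilon>*m/2) / (m/2)"
    by (rule frac_le) (use num mn assms(1,13) in auto)
  also have "\<dots> = \<epsilon>" using assms(1) by simp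
  finally show ?thesis .
qed

theorem corollary4:
  fixes R :: "(real ^ 'n) set" and l :: "real ^ 'n \<Rightarrow> real"
  assumes "compact R" and "log_convex R"
    and "continuous_on R l" and "\<forall>x\<in>R. l x > 0"
    and "\<epsilon> > (0::real)"
  shows "\<exists>(p::nat) (q::nat) (E::'n sfexpr). p > 0 \<and> q > 0 \<and> sf_wf E \<and>
     (\<forall>x\<in>R. let f = (sf_eval E (\<chi> i. (x $ i) powr (1 / real q))) powr (1 / real p) in
        \<bar>(l x - f) / min (l x) f\<bar> \<le> \<epsilon>)"
proof (cases "R = {}")
  case True
  then show ?thesis by (intro exI[of _ 1] exI[of _ "SConst 1"]) auto
next
  case False
  have RPO: "R \<subseteq> positive_orthant" using assms(2) unfolding log_convex_def by blast
  obtain x0 where x0: "x0 \<in> R" "\<forall>x\<in>R. l x0 \<le> l x"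
    using continuous_attains_inf[OF assms(1) False assms(3)] by blast
  define m where "m = l x0"
  have m0: "m > 0" using assms(4) x0 m_def by auto
  have lm: "\<forall>x\<in>R. m \<le> l x" using x0 m_def by auto
  define \<delta> where "\<delta> = min (m/2) (\<epsilon>*m/4)"
  have d0: "\<delta> > 0" using m0 assms(5) \<delta>_def by auto
  obtain g where g: "polynomial_function g" "\<forall>x\<in>R. norm (l x - g x) < \<delta>"
    using Stone_Weierstrass_polynomial_function[OF assms(1) assms(3) d0] by blast
  have "real_polynomial_function g" using g(1) by (simp only: real_polynomial_function_eq)
  then have "g \<in> DF" by (rule DF_poly)
  then obtain A B where AB: "sf_wf A" "sf_wf B" "\<forall>x. g x = sf_eval A x - sf_eval B x"
    unfolding DF_def by blast
  have contA: "continuous_on R (sf_eval A)"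
    by (rule continuous_on_subset[OF sf_cont[OF AB(1)] RPO])
  obtain x1 where x1: "x1 \<in> R" "\<forall>x\<in>R. sf_eval A x \<le> sf_eval A x1"
    using continuous_attains_sup[OF assms(1) False contA] by blast
  define M where "M = sf_eval A x1"
  have M0: "M > 0" using sf_pos[OF AB(1)] x1 RPO M_def by auto
  have aM: "\<forall>x\<in>R. sf_eval A x \<le> M" using x1 M_def by auto
  define \<theta> where "\<theta> = 1 - m/(2*M)"
  define \<eta> where "\<eta> = min (1/2) (\<epsilon>*m/(8*M))"
  have eta0: "\<eta> > 0" using m0 M0 assms(5) \<eta>_def by auto
  have th1: "\<theta> < 1" using m0 M0 \<theta>_def by auto
  obtain N where N: "\<theta> ^ N < \<eta>" using real_arch_pow_inv[OF eta0 th1] by blast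
  have "N \<noteq> 0" using N \<eta>_def by (cases N) auto
  then obtain k where k: "N = Suc k" using not0_implies_Suc by blast
  define E where "E = SDiv A (geo (SDiv B A) k)"
  have wfE: "sf_wf E" using AB geo_wf[of "SDiv B A" k] E_def by auto
  show ?thesis
  proof (intro exI[of _ 1] exI[of _ E] conjI ballI)
    fix x assume xR: "x \<in> R"
    have xP: "x \<in> positive_orthant" using xR RPO by auto
    then have xi: "\<And>i. x $ i > 0" unfolding positive_orthant_def by auto
    have vx: "(\<chi> i. (x $ i) powr (1 / real 1)) = x"
      using xi by (simp add: powr_one less_imp_le vec_eq_iff)
    define a where "a = sf_eval A x"
    define b where "b = sf_eval B x"
    define t where "t = b / a"
    define S where "S = sf_eval (geo (SDiv B A) k) x"
    have a0: "a > 0" using sf_pos[OF AB(1) xP] a_def by auto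
    have b0: "b > 0" using sf_pos[OF AB(2) xP] b_def by auto
    have gx: "g x = a - b" using AB(3) a_def b_def by auto
    have lg: "\<bar>l x - g x\<bar> < \<delta>" using g(2) xR by auto
    have lmx: "l x \<ge> m" using lm xR by auto
    have "\<delta> \<le> m/2" using \<delta>_def by auto
    then have gm: "g x \<ge> m/2" using lg lmx by linarith
    have aMx: "a \<le> M" using aM xR a_def by auto
    have gM: "g x \<le> M" using gx b0 aMx by auto
    have t0: "t > 0" using a0 b0 t_def by auto
    have tth: "t \<le> \<theta>"
    proof -
      have "t = 1 - g x / a" using gx a0 t_def by (simp add: field_simps)
      moreover have "m/(2*M) \<le> g x / a"
      proof -
        have "m/(2*M) = (m/2)/M" by simp
        also have "\<dots> \<le> g x / a" using gm aMx a0 m0 by (intro frac_le) auto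
        finally show ?thesis .
      qed
      ultimately show ?thesis using \<theta>_def by simp
    qed
    have t1: "t < 1" using tth th1 by auto
    define s where "s = t ^ Suc k"
    have s0: "0 \<le> s" using t0 s_def by auto
    have "s \<le> \<theta> ^ Suc k" unfolding s_def using t0 tth by (intro power_mono) auto
    then have seta: "s < \<eta>" using N k by auto
    have SE: "S * (1 - t) = 1 - s" using geo_eval[of "SDiv B A" k x] S_def s_def t_def a_def b_def
      by simp
    have S0: "S > 0" using sf_pos[OF geo_wf[of "SDiv B A" k] xP] AB S_def by auto
    have Eeval: "sf_eval E x = a / S" using E_def a_def S_def by simp
    have fval: "a / S = g x / (1 - s)"
    proof -
      have s1: "1 - s > 0" using seta \<eta>_def by auto
      have "a / S = a * (1 - t) / (S * (1 - t))" using t1 by simp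
      also have "\<dots> = g x / (1 - s)"
      proof -
        have "a * (1 - t) = a - b" using a0 unfolding t_def by (simp add: algebra_simps)
        then have "a * (1 - t) = g x" using gx by simp
        then show ?thesis by (simp only: SE)
      qed
      finally show ?thesis .
    qed
    have Epos: "sf_eval E x > 0" using sf_pos[OF wfE xP] .
    have "\<bar>(l x - g x / (1 - s)) / min (l x) (g x / (1 - s))\<bar> \<le> \<epsilon>"
    proof -
      have dm: "\<delta> \<le> m/2" "\<delta> \<le> \<epsilon>*m/4" unfolding \<delta>_def by auto
      have sh: "s \<le> 1/2" "s \<le> \<epsilon>*m/(8*M)" using seta unfolding \<eta>_def by auto
      show ?thesis by (rule key_bound[OF m0 lmx lg dm gm gM M0 s0 sh refl assms(5)])
    qed
    moreover have "(sf_eval E (\<chi> i. (x $ i) powr (1 / real 1))) powr (1 / real 1) = g x / (1 - s)"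
    proof -
      have "(sf_eval E (\<chi> i. (x $ i) powr (1 / real 1))) powr (1 / real 1) = sf_eval E x powr 1"
        by (simp only: vx, simp)
      also have "\<dots> = sf_eval E x" using Epos by (simp add: powr_one)
      finally show ?thesis using Eeval fval by simp
    qed
    ultimately show "let f = (sf_eval E (\<chi> i. (x $ i) powr (1 / real 1))) powr (1 / real 1) in
        \<bar>(l x - f) / min (l x) f\<bar> \<le> \<epsilon>"
      unfolding Let_def by simp
  next
    show "sf_wf E" by (rule wfE)
  qed simp_all
qed

end
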